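(* Let $U$ be a finite set, $d$ an $\alpha$-relaxed semi-metric distance on $U$ with $\alpha\ge 1$, $\mathcal{M}=\langle U,\mathcal{F}\rangle$ a matroid, and $S,O$ two bases of $\mathcal{M}$. Let $A=O\cap S$, $B=S\setminus A=\{b_1,\dots,b_t\}$, $C=O\setminus A$, and let $g:B\to C$ be a bijection such that $S-b+g(b)\in\mathcal{F}$ for every $b\in B$; set $c_i=g(b_i)$. If $t>2$, then $$\alpha\Big(d(B,C)-\sum_{i=1}^t d(b_i,c_i)\Big)\;\ge\; d(C).$$
   Context: An $\alpha$-relaxed semi-metric distance on $U$ (with $\alpha\ge 1$) is a function $d:U\times U\to\mathbb{R}_{\ge 0}$ with $d(u,v)=d(v,u)$, $d(u,u)=0$, satisfying $d(u,v)\le \alpha\,(d(v,w)+d(w,u))$ for all $u,v,w\in U$. For $X\subseteq U$, $d(X)=\sum_{\{u,v\}\subseteq X,\,u\ne v} d(u,v)$; for disjoint $X,Y$, $d(X,Y)=\sum_{x\in X,y\in Y} d(x,y)$. $S-b+c$ denotes $(S\setminus\{b\})\cup\{c\}$. *)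

theory Defs
  imports Complex_Main
begin

definition relaxed_semimetric :: "'a set \<Rightarrow> ('a \<Rightarrow> 'a \<Rightarrow> real) \<Rightarrow> real \<Rightarrow> bool" where
  "relaxed_semimetric U d \<alpha> \<longleftrightarrow> \<alpha> \<ge> 1 \<and>
     (\<forall>u\<in>U. \<forall>v\<in>U. d u v \<ge> 0 \<and> d u v = d v u) \<and>
     (\<forall>u\<in>U. d u u = 0) \<and>
     (\<forall>u\<in>U. \<forall>v\<in>U. \<forall>w\<in>U. d u v \<le> \<alpha> * (d v w + d w u))"

definition matroid :: "'a set \<Rightarrow> 'a set set \<Rightarrow> bool" where
  "matroid U F \<longleftrightarrow> finite U \<and> F \<subseteq> Pow U \<and> {} \<in> F \<and>
     (\<forall>X Y. Y \<in> F \<and> X \<subseteq> Y \<longrightarrow> X \<in> F) \<and>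
     (\<forall>X\<in>F. \<forall>Y\<in>F. card X < card Y \<longrightarrow> (\<exists>y\<in>Y - X. insert y X \<in> F))"

definition basis :: "'a set set \<Rightarrow> 'a set \<Rightarrow> bool" where
  "basis F S \<longleftrightarrow> S \<in> F \<and> (\<forall>X\<in>F. S \<subseteq> X \<longrightarrow> X = S)"

definition dcross :: "('a \<Rightarrow> 'a \<Rightarrow> real) \<Rightarrow> 'a set \<Rightarrow> 'a set \<Rightarrow> real" where
  "dcross d X Y = (\<Sum>x\<in>X. \<Sum>y\<in>Y. d x y)"

(* d(X) = sum over unordered pairs {u,v} of distinct elements of X of d(u,v);
   written as half the sum over ordered pairs (d is symmetric on U) *)
definition dset :: "('a \<Rightarrow> 'a \<Rightarrow> real) \<Rightarrow> 'a set \<Rightarrow> real" where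
  "dset d X = (\<Sum>u\<in>X. \<Sum>v\<in>X. if u \<noteq> v then d u v else 0) / 2"

end

theory Submission
  imports Defs
begin

theorem lemma4:
  fixes U :: "'a set" and d :: "'a \<Rightarrow> 'a \<Rightarrow> real" and \<alpha> :: real
    and F :: "'a set set" and S Opt A B C :: "'a set" and g :: "'a \<Rightarrow> 'a"
  assumes "finite U"
    and "relaxed_semimetric U d \<alpha>"
    and "matroid U F"
    and "basis F S" and "basis F Opt"
    and "A = Opt \<inter> S" and "B = S - A" and "C = Opt - A"
    and "bij_betw g B C"
    and "\<forall>b\<in>B. (S - {b}) \<union> {g b} \<in> F"
    and "card B > 2"
  shows "\<alpha> * (dcross d B C - (\<Sum>b\<in>B. d b (g b))) \<ge> dset d C"
proof -
  have FU: "F \<subseteq> Pow U" using assms(3) unfolding matroid_def by auto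
  have SU: "S \<subseteq> U" using assms(4) FU unfolding basis_def by auto
  have OU: "Opt \<subseteq> U" using assms(5) FU unfolding basis_def by auto
  have BU: "B \<subseteq> U" using SU assms(7) by auto
  have CU: "C \<subseteq> U" using OU assms(8) by auto
  have finB: "finite B" using BU assms(1) finite_subset by auto
  have gB: "\<And>u. u \<in> B \<Longrightarrow> g u \<in> U" using assms(9) CU bij_betw_apply by fastforce
  have injg: "inj_on g B" and gim: "g ` B = C" using assms(9) unfolding bij_betw_def by auto
  have sym: "\<And>u v. u \<in> U \<Longrightarrow> v \<in> U \<Longrightarrow> d u v = d v u"
    using assms(2) unfolding relaxed_semimetric_def by auto
  have tri: "\<And>u v w. u \<in> U \<Longrightarrow> v \<in> U \<Longrightarrow> w \<in> U \<Longrightarrow> d u v \<le> \<alpha> * (d v w + d w u)"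
    using assms(2) unfolding relaxed_semimetric_def by auto
  define t where "t = real (card B)"
  have t2: "t - 2 > 0" using assms(11) t_def by auto
  define D where "D u k = d k (g u)" for u k
  define X where "X = (\<Sum>u\<in>B. \<Sum>k\<in>B. if k \<noteq> u then D u k else 0)"
  define Y where "Y = (\<Sum>u\<in>B. \<Sum>v\<in>B. if u \<noteq> v then d (g u) (g v) else 0)"
  have hX: "dcross d B C - (\<Sum>b\<in>B. d b (g b)) = X"
  proof -
    have "dcross d B C = (\<Sum>k\<in>B. \<Sum>u\<in>B. d k (g u))"
      unfolding dcross_def gim[symmetric] by (simp add: sum.reindex[OF injg] comp_def)
    also have "\<dots> = (\<Sum>u\<in>B. \<Sum>k\<in>B. D u k)" unfolding D_def by (rule sum.swap)
    finally have e1: "dcross d B C = (\<Sum>u\<in>B. \<Sum>k\<in>B. D u k)" .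
    have "\<And>u. u \<in> B \<Longrightarrow> (\<Sum>k\<in>B. D u k) = D u u + (\<Sum>k\<in>B. if k \<noteq> u then D u k else 0)"
    proof -
      fix u assume u: "u \<in> B"
      have "(\<Sum>k\<in>B. D u k) = (\<Sum>k\<in>B. (if k = u then D u k else 0) + (if k \<noteq> u then D u k else 0))"
        by (rule sum.cong) auto
      also have "\<dots> = D u u + (\<Sum>k\<in>B. if k \<noteq> u then D u k else 0)"
        using u finB by (simp add: sum.distrib)
      finally show "(\<Sum>k\<in>B. D u k) = D u u + (\<Sum>k\<in>B. if k \<noteq> u then D u k else 0)" .
    qed
    hence "(\<Sum>u\<in>B. \<Sum>k\<in>B. D u k) = (\<Sum>u\<in>B. D u u) + X"
      unfolding X_def by (simp add: sum.distrib)
    thus ?thesis using e1 unfolding D_def by simp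
  qed
  have hY: "dset d C = Y / 2"
  proof -
    have "(\<Sum>u\<in>C. \<Sum>v\<in>C. if u \<noteq> v then d u v else 0)
        = (\<Sum>u\<in>B. \<Sum>v\<in>C. if g u \<noteq> v then d (g u) v else 0)"
      unfolding gim[symmetric] by (simp add: sum.reindex[OF injg] comp_def)
    also have "\<dots> = (\<Sum>u\<in>B. \<Sum>v\<in>B. if g u \<noteq> g v then d (g u) (g v) else 0)"
      unfolding gim[symmetric] by (simp add: sum.reindex[OF injg] comp_def)
    also have "\<dots> = Y" unfolding Y_def
      apply (rule sum.cong, simp, rule sum.cong, simp)
      using injg by (auto simp: inj_on_def)
    finally show ?thesis unfolding dset_def by simp
  qed
  define P where "P u v k = ((u::'a) \<noteq> v \<and> k \<noteq> u \<and> k \<noteq> v)" for u v k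
  have key: "\<And>u v. u \<in> B \<Longrightarrow> v \<in> B \<Longrightarrow>
     (t - 2) * (if u \<noteq> v then d (g u) (g v) else 0)
       \<le> \<alpha> * (\<Sum>k\<in>B. if P u v k then D u k + D v k else 0)"
  proof -
    fix u v assume u: "u \<in> B" and v: "v \<in> B"
    show "(t - 2) * (if u \<noteq> v then d (g u) (g v) else 0)
       \<le> \<alpha> * (\<Sum>k\<in>B. if P u v k then D u k + D v k else 0)"
    proof (cases "u = v")
      case True thus ?thesis unfolding P_def by simp
    next
      case False
      have cd: "card (B - {u, v}) = card B - 2" using u v False finB
        by (simp add: card_Diff_subset)
      have "(\<Sum>k\<in>B. if P u v k then D u k + D v k else 0) = (\<Sum>k\<in>B - {u,v}. D u k + D v k)"
        using finB False unfolding P_def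
        by (simp add: sum.If_cases) (rule sum.cong, auto)
      hence "\<alpha> * (\<Sum>k\<in>B. if P u v k then D u k + D v k else 0) = (\<Sum>k\<in>B - {u,v}. \<alpha> * (D u k + D v k))"
        by (simp add: sum_distrib_left)
      also have "\<dots> \<ge> (\<Sum>k\<in>B - {u,v}. d (g u) (g v))"
      proof (rule sum_mono)
        fix k assume k: "k \<in> B - {u, v}"
        have "d (g u) (g v) \<le> \<alpha> * (d (g v) k + d k (g u))"
          using tri gB u v k BU by auto
        also have "\<dots> = \<alpha> * (D u k + D v k)" unfolding D_def
          using sym gB u v k BU by auto
        finally show "d (g u) (g v) \<le> \<alpha> * (D u k + D v k)" .
      qed
      moreover have "(\<Sum>k\<in>B - {u,v}. d (g u) (g v)) = (t - 2) * d (g u) (g v)"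
        using cd assms(11) t_def by (simp add: of_nat_diff)
      ultimately have "(t - 2) * d (g u) (g v) \<le> \<alpha> * (\<Sum>k\<in>B. if P u v k then D u k + D v k else 0)"
        by linarith
      thus ?thesis using False by simp
    qed
  qed
  define Z1 where "Z1 = (\<Sum>u\<in>B. \<Sum>v\<in>B. \<Sum>k\<in>B. if P u v k then D u k else 0)"
  define Z2 where "Z2 = (\<Sum>u\<in>B. \<Sum>v\<in>B. \<Sum>k\<in>B. if P u v k then D v k else 0)"
  have "(t - 2) * Y \<le> (\<Sum>u\<in>B. \<Sum>v\<in>B. \<alpha> * (\<Sum>k\<in>B. if P u v k then D u k + D v k else 0))"
  proof -
    have "(t - 2) * Y = (\<Sum>u\<in>B. \<Sum>v\<in>B. (t - 2) * (if u \<noteq> v then d (g u) (g v) else 0))"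
      unfolding Y_def by (simp add: sum_distrib_left)
    also have "\<dots> \<le> (\<Sum>u\<in>B. \<Sum>v\<in>B. \<alpha> * (\<Sum>k\<in>B. if P u v k then D u k + D v k else 0))"
      by (intro sum_mono key)
    finally show ?thesis .
  qed
  also have "\<dots> = \<alpha> * (Z1 + Z2)"
    unfolding Z1_def Z2_def sum_distrib_left[symmetric] sum.distrib[symmetric]
    by (rule arg_cong[where f="\<lambda>x. \<alpha> * x"]) (intro sum.cong refl, auto)
  finally have ineq: "(t - 2) * Y \<le> \<alpha> * (Z1 + Z2)" .
  have "Z2 = (\<Sum>v\<in>B. \<Sum>u\<in>B. \<Sum>k\<in>B. if P u v k then D v k else 0)"
    unfolding Z2_def by (rule sum.swap)
  also have "\<dots> = Z1" unfolding Z1_def P_def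
    by (intro sum.cong refl) auto
  finally have Z21: "Z2 = Z1" .
  have "Z1 = (\<Sum>u\<in>B. \<Sum>k\<in>B. \<Sum>v\<in>B. if P u v k then D u k else 0)"
    unfolding Z1_def by (intro sum.cong refl sum.swap)
  also have "\<dots> = (\<Sum>u\<in>B. \<Sum>k\<in>B. (t - 2) * (if k \<noteq> u then D u k else 0))"
  proof (intro sum.cong refl)
    fix u k assume u: "u \<in> B" and k: "k \<in> B"
    show "(\<Sum>v\<in>B. if P u v k then D u k else 0) = (t - 2) * (if k \<noteq> u then D u k else 0)"
    proof (cases "k = u")
      case True thus ?thesis unfolding P_def by simp
    next
      case False
      have cd: "card (B - {u, k}) = card B - 2" using u k False finB
        by (simp add: card_Diff_subset)
      have ss: "B \<inter> {v. P u v k} = B - {u,k}" using False by (auto simp: P_def)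
      have "(\<Sum>v\<in>B. if P u v k then D u k else 0) = (\<Sum>v\<in>B - {u,k}. D u k)"
        using finB by (simp add: sum.If_cases ss)
      also have "\<dots> = (t - 2) * D u k"
        using cd assms(11) t_def by (simp add: of_nat_diff)
      finally show ?thesis using False by simp
    qed
  qed
  also have "\<dots> = (t - 2) * X" unfolding X_def by (simp add: sum_distrib_left)
  finally have "Z1 = (t - 2) * X" .
  with ineq Z21 have "(t - 2) * Y \<le> (t - 2) * (2 * \<alpha> * X)" by (simp add: algebra_simps)
  hence "Y \<le> 2 * \<alpha> * X" using t2 by simp
  thus ?thesis using hX hY by simp
qed

end
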